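(* Let $\epsilon<1$ be a constant. For any instance oracle $f$ with $\max\{|f(G,v)|: G \text{ an } n\text{-node graph}, v\in G\}=o(n\log n)$ and any deterministic exploration algorithm $A$, for infinitely many $n$ there exist an $n$-node hamiltonian graph $G$ and a starting node $v$ such that the agent executing $A$ with input $f(G,v)$ from $v$ makes at least $n+n^{\epsilon}$ edge traversals before it has visited all nodes and stopped (or fails to explore $G$).
   Context: Model: a graph is a simple connected undirected graph with $n$ nodes. Nodes are unlabeled; at each node of degree $d$ the incident edges carry distinct port numbers $0,\dots,d-1$, arbitrarily assigned. A mobile agent starts at some node. At each step, located at a node $u$ whose degree it knows, it chooses a port at $u$ and traverses the corresponding edge to a neighbor $w$; upon arrival it learns the port number of this edge at $w$ and the degree of $w$. The agent must visit all nodes and stop; the time of exploration is the number of edge traversals. A deterministic exploration algorithm receives as input a binary string (advice); its size is its length. An instance oracle is a function assigning a binary string $f(G,v)$ to each pair $(G,v)$ where $G$ is a port-numbered graph and $v$ is the starting node of the agent. A graph is hamiltonian if it has a cycle through all its nodes. Logarithms are to base 2. *)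

theory Defs
  imports Complex_Main "HOL-Library.Landau_Symbols"
begin

text \<open>Port-numbered graph with nodes 0..<nv. port G u p = (w, q): the edge at port p of u
  leads to w and has port number q at w. Values outside the valid range are normalised.\<close>
record pgraph =
  nv   :: nat
  deg  :: "nat \<Rightarrow> nat"
  port :: "nat \<Rightarrow> nat \<Rightarrow> nat \<times> nat"

definition adj :: "pgraph \<Rightarrow> (nat \<times> nat) set" where
  "adj G = {(u, w). u < nv G \<and> (\<exists>p < deg G u. fst (port G u p) = w)}"

definition pg_wf :: "pgraph \<Rightarrow> bool" where
  "pg_wf G \<longleftrightarrow>
     0 < nv G
   \<and> (\<forall>u. nv G \<le> u \<longrightarrow> deg G u = 0)
   \<and> (\<forall>u p. \<not> (u < nv G \<and> p < deg G u) \<longrightarrow> port G u p = (0, 0))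
   \<and> (\<forall>u < nv G. \<forall>p < deg G u.
          fst (port G u p) < nv G \<and> fst (port G u p) \<noteq> u
        \<and> snd (port G u p) < deg G (fst (port G u p))
        \<and> port G (fst (port G u p)) (snd (port G u p)) = (u, p))
   \<and> (\<forall>u < nv G. inj_on (\<lambda>p. fst (port G u p)) {..<deg G u})
   \<and> (\<forall>u < nv G. \<forall>w < nv G. (u, w) \<in> (adj G)\<^sup>*)"

definition hamiltonian :: "pgraph \<Rightarrow> bool" where
  "hamiltonian G \<longleftrightarrow> (\<exists>xs. distinct xs \<and> set xs = {..<nv G} \<and> 3 \<le> length xs
      \<and> (\<forall>i < length xs. (xs ! i, xs ! ((i + 1) mod length xs)) \<in> adj G))"

text \<open>Agent history: list of (port taken, port at arrival node, degree of arrival node).\<close>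
type_synonym hist = "(nat \<times> nat \<times> nat) list"

text \<open>Deterministic exploration algorithm: given the advice, the degree of the start node
  and the history so far, either stops (None) or chooses a port (Some p).\<close>
type_synonym alg = "bool list \<Rightarrow> nat \<Rightarrow> hist \<Rightarrow> nat option"

fun cfg :: "pgraph \<Rightarrow> alg \<Rightarrow> bool list \<Rightarrow> nat \<Rightarrow> nat \<Rightarrow> nat list \<times> hist" where
  "cfg G A a v 0 = ([v], [])"
| "cfg G A a v (Suc k) =
     (let (ps, h) = cfg G A a v k; u = last ps in
      case A a (deg G v) h of
        None \<Rightarrow> (ps, h)
      | Some p \<Rightarrow> (ps @ [fst (port G u p)],
                  h @ [(p, snd (port G u p), deg G (fst (port G u p)))]))"

definition explores_in :: "pgraph \<Rightarrow> alg \<Rightarrow> bool list \<Rightarrow> nat \<Rightarrow> nat \<Rightarrow> bool" where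
  "explores_in G A a v t \<longleftrightarrow>
     (let (ps, h) = cfg G A a v t in
        length h = t
      \<and> (\<forall>i < t. fst (h ! i) < deg G (ps ! i))
      \<and> A a (deg G v) h = None
      \<and> set ps = {..<nv G})"

end

theory Submission
  imports Defs "HOL-Combinatorics.Permutations" "HOL-Real_Asymp.Real_Asymp"
begin


lemma cfg_step:
  "cfg G A a v (Suc k) = (case A a (deg G v) (snd (cfg G A a v k)) of
      None \<Rightarrow> cfg G A a v k
    | Some p \<Rightarrow> (fst (cfg G A a v k) @ [fst (port G (last (fst (cfg G A a v k))) p)],
                snd (cfg G A a v k) @ [(p, snd (port G (last (fst (cfg G A a v k))) p),
                      deg G (fst (port G (last (fst (cfg G A a v k))) p)))]))"
  by (simp add: case_prod_beta Let_def split: option.splits)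

declare cfg.simps(2)[simp del]

lemma cfg_len: "length (fst (cfg G A a v k)) = Suc (length (snd (cfg G A a v k)))"
  by (induction k) (auto simp: cfg_step split: option.splits)

lemma cfg_len_le: "length (snd (cfg G A a v (j + i))) \<le> length (snd (cfg G A a v j)) + i"
proof (induction i)
  case 0 then show ?case by simp
next
  case (Suc i)
  then show ?case by (auto simp: cfg_step[of G A a v "j+i"] split: option.splits)
qed

lemma cfg_take:
  assumes "length (snd (cfg G A a v k)) = k"
  shows "\<forall>j\<le>k. cfg G A a v j = (take (Suc j) (fst (cfg G A a v k)), take j (snd (cfg G A a v k)))"
  using assms
proof (induction k)
  case 0 then show ?case by simp
next
  case (Suc k)
  have le: "length (snd (cfg G A a v k)) \<le> k"
    using cfg_len_le[of G A a v 0 k] by simp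
  have ls: "length (snd (cfg G A a v (Suc k))) \<le> Suc (length (snd (cfg G A a v k)))"
    using cfg_len_le[of G A a v k 1] by simp
  have lk: "length (snd (cfg G A a v k)) = k" using Suc.prems le ls by linarith
  have "A a (deg G v) (snd (cfg G A a v k)) \<noteq> None"
  proof
    assume N: "A a (deg G v) (snd (cfg G A a v k)) = None"
    have "cfg G A a v (Suc k) = cfg G A a v k" by (simp only: cfg_step N option.case)
    then show False using Suc.prems lk by simp
  qed
  then obtain p where p: "A a (deg G v) (snd (cfg G A a v k)) = Some p" by blast
  obtain x e where xe: "cfg G A a v (Suc k) = (fst (cfg G A a v k) @ [x], snd (cfg G A a v k) @ [e])"
    by (simp only: cfg_step p option.case)
  have lp: "length (fst (cfg G A a v k)) = Suc k" using cfg_len lk by metis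
  show ?case
  proof (intro allI impI)
    fix j assume "j \<le> Suc k"
    then consider "j = Suc k" | "j \<le> k" by linarith
    then show "cfg G A a v j = (take (Suc j) (fst (cfg G A a v (Suc k))), take j (snd (cfg G A a v (Suc k))))"
    proof cases
      case 1 then show ?thesis using xe lp lk by simp
    next
      case 2
      have "cfg G A a v j = (take (Suc j) (fst (cfg G A a v k)), take j (snd (cfg G A a v k)))"
        using Suc.IH[OF lk] 2 by blast
      then show ?thesis using xe lp lk 2 by simp
    qed
  qed
qed

definition isrun :: "pgraph \<Rightarrow> alg \<Rightarrow> bool list \<Rightarrow> nat \<Rightarrow> nat \<Rightarrow> nat list \<Rightarrow> hist \<Rightarrow> bool" where
  "isrun G A a v t ps h \<longleftrightarrow> length ps = Suc t \<and> length h = t \<and> ps ! 0 = v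
    \<and> (\<forall>j<t. A a (deg G v) (take j h) = Some (fst (h ! j))
          \<and> fst (h ! j) < deg G (ps ! j)
          \<and> ps ! Suc j = fst (port G (ps ! j) (fst (h ! j)))
          \<and> snd (h ! j) = (snd (port G (ps ! j) (fst (h ! j))), deg G (ps ! Suc j)))
    \<and> A a (deg G v) h = None"

lemma explores_isrun:
  assumes "explores_in G A a v t"
  shows "isrun G A a v t (fst (cfg G A a v t)) (snd (cfg G A a v t)) \<and> set (fst (cfg G A a v t)) = {..<nv G}"
proof -
  obtain ps h where c: "cfg G A a v t = (ps, h)" by (cases "cfg G A a v t")
  have lh: "length h = t" and val: "\<forall>i<t. fst (h ! i) < deg G (ps ! i)"
    and nn: "A a (deg G v) h = None" and st: "set ps = {..<nv G}"
    using assms c by (auto simp: explores_in_def)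
  have tk: "\<forall>j\<le>t. cfg G A a v j = (take (Suc j) ps, take j h)" using cfg_take[of G A a v t] c lh
    by (metis fst_conv snd_conv)
  have lp: "length ps = Suc t" using cfg_len[of G A a v t] c lh by simp
  have "take 1 ps = [v]" using tk[rule_format, of 0] by simp
  then have p0: "ps ! 0 = v" using lp by (cases ps) auto
  have step: "A a (deg G v) (take j h) = Some (fst (h ! j))
          \<and> ps ! Suc j = fst (port G (ps ! j) (fst (h ! j)))
          \<and> snd (h ! j) = (snd (port G (ps ! j) (fst (h ! j))), deg G (ps ! Suc j))" if j: "j < t" for j
  proof -
    have c1: "cfg G A a v j = (take (Suc j) ps, take j h)" using tk j by auto
    have c2: "cfg G A a v (Suc j) = (take (Suc (Suc j)) ps, take (Suc j) h)" using tk j by auto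
    have ltj: "last (take (Suc j) ps) = ps ! j" using lp j by (simp add: take_Suc_conv_app_nth)
    have tS: "take (Suc (Suc j)) ps = take (Suc j) ps @ [ps ! Suc j]" using lp j by (simp add: take_Suc_conv_app_nth)
    have tH: "take (Suc j) h = take j h @ [h ! j]" using lh j by (simp add: take_Suc_conv_app_nth)
    show ?thesis
    proof (cases "A a (deg G v) (take j h)")
      case None
      then have "cfg G A a v (Suc j) = cfg G A a v j" using c1 by (simp add: cfg_step)
      then show ?thesis using c1 c2 tH by simp
    next
      case (Some p)
      then have "cfg G A a v (Suc j) = (take (Suc j) ps @ [fst (port G (ps ! j) p)],
           take j h @ [(p, snd (port G (ps ! j) p), deg G (fst (port G (ps ! j) p)))])"
        using c1 ltj by (simp add: cfg_step)
      then show ?thesis using c2 tS tH Some by auto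
    qed
  qed
  show ?thesis unfolding isrun_def using c lp lh p0 step val nn st by auto
qed

lemma isrun_det:
  assumes r1: "isrun G1 A a v t1 ps1 h1" and r2: "isrun G2 A a v t2 ps2 h2"
    and dg: "deg G1 = deg G2"
    and agree: "\<And>j. j < t1 \<Longrightarrow> j < t2 \<Longrightarrow> take (Suc j) ps1 = take (Suc j) ps2 \<Longrightarrow> take j h1 = take j h2
       \<Longrightarrow> fst (h1 ! j) = fst (h2 ! j)
       \<Longrightarrow> port G1 (ps1 ! j) (fst (h1 ! j)) = port G2 (ps1 ! j) (fst (h1 ! j))"
  shows "t1 = t2 \<and> ps1 = ps2 \<and> h1 = h2"
proof -
  note d1 = r1[unfolded isrun_def] and d2 = r2[unfolded isrun_def]
  have main: "j \<le> t1 \<longrightarrow> j \<le> t2 \<longrightarrow> take (Suc j) ps1 = take (Suc j) ps2 \<and> take j h1 = take j h2" for j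
  proof (induction j)
    case 0 then show ?case using d1 d2 by (simp add: take_Suc_conv_app_nth)
  next
    case (Suc j)
    show ?case
    proof (intro impI)
      assume a1: "Suc j \<le> t1" and a2: "Suc j \<le> t2"
      have j1: "j < t1" and j2: "j < t2" using a1 a2 by auto
      have IH: "take (Suc j) ps1 = take (Suc j) ps2" "take j h1 = take j h2" using Suc.IH j1 j2 by auto
      have "A a (deg G1 v) (take j h1) = Some (fst (h1 ! j))" using d1 j1 by blast
      moreover have "A a (deg G2 v) (take j h2) = Some (fst (h2 ! j))" using d2 j2 by blast
      ultimately have pe: "fst (h1 ! j) = fst (h2 ! j)" using IH dg by simp
      have pj: "ps1 ! j = ps2 ! j"
      proof -
        have "take (Suc j) ps1 ! j = take (Suc j) ps2 ! j" using IH(1) by simp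
        then show ?thesis by simp
      qed
      have po: "port G1 (ps1 ! j) (fst (h1 ! j)) = port G2 (ps1 ! j) (fst (h1 ! j))"
        using agree[OF j1 j2 IH pe] .
      have n1: "ps1 ! Suc j = ps2 ! Suc j"
      proof -
        have "ps1 ! Suc j = fst (port G1 (ps1 ! j) (fst (h1 ! j)))" using d1 j1 by blast
        moreover have "ps2 ! Suc j = fst (port G2 (ps2 ! j) (fst (h2 ! j)))" using d2 j2 by blast
        ultimately show ?thesis using po pe pj by simp
      qed
      have hj: "h1 ! j = h2 ! j"
      proof -
        have "snd (h1 ! j) = (snd (port G1 (ps1 ! j) (fst (h1 ! j))), deg G1 (ps1 ! Suc j))" using d1 j1 by blast
        moreover have "snd (h2 ! j) = (snd (port G2 (ps2 ! j) (fst (h2 ! j))), deg G2 (ps2 ! Suc j))" using d2 j2 by blast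
        ultimately have "snd (h1 ! j) = snd (h2 ! j)" using po pe pj n1 dg by simp
        then show ?thesis using pe by (simp add: prod_eq_iff)
      qed
      have "take (Suc (Suc j)) ps1 = take (Suc (Suc j)) ps2"
        using IH(1) n1 d1 d2 a1 a2 by (simp add: take_Suc_conv_app_nth)
      moreover have "take (Suc j) h1 = take (Suc j) h2"
        using IH(2) hj d1 d2 j1 j2 by (simp add: take_Suc_conv_app_nth)
      ultimately show "take (Suc (Suc j)) ps1 = take (Suc (Suc j)) ps2 \<and> take (Suc j) h1 = take (Suc j) h2" by simp
    qed
  qed
  have tt: "t1 = t2"
  proof (rule ccontr)
    assume "t1 \<noteq> t2"
    then consider "t1 < t2" | "t2 < t1" by linarith
    then show False
    proof cases
      case 1
      then have "take t1 h1 = take t1 h2" using main[of t1] by simp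
      then have "h1 = take t1 h2" using d1 by simp
      then show False using d1 d2 1 dg by auto
    next
      case 2
      then have "take t2 h1 = take t2 h2" using main[of t2] by simp
      then have "h2 = take t2 h1" using d2 by simp
      then show False using d1 d2 2 dg by auto
    qed
  qed
  then show ?thesis using main[of t1] d1 d2 by auto
qed




locale fam =
  fixes m n :: nat
  assumes m3: "3 \<le> m" and mn: "2 * m + 3 \<le> n"
begin

definition Y :: "nat set" where "Y = {m..<n}"
definition sc :: "nat \<Rightarrow> nat" where "sc y = (if y = n - 1 then m else Suc y)"
definition pr :: "nat \<Rightarrow> nat" where "pr y = (if y = m then n - 1 else y - 1)"
definition nb :: "nat \<Rightarrow> nat \<Rightarrow> nat" where
  "nb y c = (if c < m then c else if c = m then sc y else pr y)"
definition slot :: "nat \<Rightarrow> nat \<Rightarrow> nat" where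
  "slot w u = (if u < m then u else if u = pr w then Suc m else m)"
definition dg :: "nat \<Rightarrow> nat" where
  "dg u = (if u < m then n - m else if u < n then m + 2 else 0)"
definition pt :: "(nat \<Rightarrow> nat \<Rightarrow> nat) \<Rightarrow> nat \<Rightarrow> nat \<Rightarrow> nat \<times> nat" where
  "pt \<pi> u p = (if u < n \<and> p < dg u then
      (if u < m then (m + p, inv (\<pi> (m + p)) u)
       else (let w = nb u (\<pi> u p) in (w, if w < m then u - m else inv (\<pi> w) (slot w u))))
    else (0, 0))"
definition Gr :: "(nat \<Rightarrow> nat \<Rightarrow> nat) \<Rightarrow> pgraph" where
  "Gr \<pi> = \<lparr>nv = n, deg = dg, port = pt \<pi>\<rparr>"
definition F :: "(nat \<Rightarrow> nat \<Rightarrow> nat) set" where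
  "F = {\<pi>. \<forall>y. (y \<in> Y \<longrightarrow> \<pi> y permutes {..<m+2}) \<and> (y \<notin> Y \<longrightarrow> \<pi> y = id)}"

lemma Y_iff: "y \<in> Y \<longleftrightarrow> m \<le> y \<and> y < n" by (auto simp: Y_def)

lemma sc_Y: "y \<in> Y \<Longrightarrow> sc y \<in> Y" using mn by (auto simp: Y_iff sc_def)
lemma pr_Y: "y \<in> Y \<Longrightarrow> pr y \<in> Y" using mn by (auto simp: Y_iff pr_def)
lemma sc_ne: "y \<in> Y \<Longrightarrow> sc y \<noteq> y" using mn by (auto simp: Y_iff sc_def)
lemma pr_ne: "y \<in> Y \<Longrightarrow> pr y \<noteq> y" using mn by (auto simp: Y_iff pr_def)
lemma sc_pr_ne: "y \<in> Y \<Longrightarrow> sc y \<noteq> pr y" using mn by (auto simp: Y_iff sc_def pr_def)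
lemma pr_sc: "y \<in> Y \<Longrightarrow> pr (sc y) = y" using mn by (auto simp: Y_iff sc_def pr_def)
lemma sc_pr: "y \<in> Y \<Longrightarrow> sc (pr y) = y" using mn by (auto simp: Y_iff sc_def pr_def)

lemma nb_lt: "y \<in> Y \<Longrightarrow> c < m + 2 \<Longrightarrow> nb y c < n"
  using sc_Y pr_Y mn by (auto simp: nb_def Y_iff)
lemma nb_ne: "y \<in> Y \<Longrightarrow> c < m + 2 \<Longrightarrow> nb y c \<noteq> y"
  using sc_ne pr_ne by (auto simp: nb_def Y_iff)
lemma nb_Y_iff: "y \<in> Y \<Longrightarrow> c < m + 2 \<Longrightarrow> nb y c \<in> Y \<longleftrightarrow> m \<le> c"
  using sc_Y pr_Y by (auto simp: nb_def Y_iff)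
lemma nb_hub: "c < m \<Longrightarrow> nb y c = c" by (simp add: nb_def)
lemma nb_inj: assumes "y \<in> Y" shows "inj_on (nb y) {..<m+2}"
proof -
  have "m \<le> sc y" "m \<le> pr y" "sc y \<noteq> pr y" using sc_pr_ne[OF assms] sc_Y[OF assms] pr_Y[OF assms] by (auto simp: Y_iff)
  then show ?thesis by (auto simp: inj_on_def nb_def split: if_splits)
qed
lemma slot_lt: "u < n \<Longrightarrow> slot w u < m + 2" by (simp add: slot_def)
lemma nb_slot_hub: "u < m \<Longrightarrow> nb w (slot w u) = u" by (simp add: slot_def nb_def)
lemma nb_slot_sc: "w \<in> Y \<Longrightarrow> nb w (slot w (sc w)) = sc w"
  using sc_pr_ne sc_Y by (auto simp: slot_def nb_def Y_iff)
lemma nb_slot_pr: "w \<in> Y \<Longrightarrow> nb w (slot w (pr w)) = pr w"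
  using pr_Y by (auto simp: slot_def nb_def Y_iff)

lemma F_perm: "\<pi> \<in> F \<Longrightarrow> y \<in> Y \<Longrightarrow> \<pi> y permutes {..<m+2}" by (simp add: F_def)
lemma F_lt: "\<pi> \<in> F \<Longrightarrow> y \<in> Y \<Longrightarrow> c < m + 2 \<Longrightarrow> \<pi> y c < m + 2"
  using F_perm permutes_in_image by fastforce
lemma F_inv_lt: "\<pi> \<in> F \<Longrightarrow> y \<in> Y \<Longrightarrow> c < m + 2 \<Longrightarrow> inv (\<pi> y) c < m + 2"
  using F_perm permutes_in_image permutes_inv by fastforce
lemma F_inv1: "\<pi> \<in> F \<Longrightarrow> y \<in> Y \<Longrightarrow> \<pi> y (inv (\<pi> y) c) = c"
  using F_perm permutes_inverses(1) by fastforce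
lemma F_inv2: "\<pi> \<in> F \<Longrightarrow> y \<in> Y \<Longrightarrow> inv (\<pi> y) (\<pi> y c) = c"
  using F_perm permutes_inverses(2) by fastforce

lemma pt_hub: "u < m \<Longrightarrow> p < n - m \<Longrightarrow> pt \<pi> u p = (m + p, inv (\<pi> (m + p)) u)"
  using mn by (simp add: pt_def dg_def)
lemma pt_Y: "u \<in> Y \<Longrightarrow> p < m + 2 \<Longrightarrow> pt \<pi> u p =
   (nb u (\<pi> u p), if nb u (\<pi> u p) < m then u - m else inv (\<pi> (nb u (\<pi> u p))) (slot (nb u (\<pi> u p)) u))"
  by (simp add: pt_def dg_def Y_iff Let_def)
lemma pt_out: "\<not> (u < n \<and> p < dg u) \<Longrightarrow> pt \<pi> u p = (0, 0)" unfolding pt_def by presburger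

lemma dg_Y: "u \<in> Y \<Longrightarrow> dg u = m + 2" by (simp add: dg_def Y_iff)
lemma dg_hub: "u < m \<Longrightarrow> dg u = n - m" by (simp add: dg_def)

lemma pt_valid:
  assumes F: "\<pi> \<in> F" and u: "u < n" and p: "p < dg u"
  shows "fst (pt \<pi> u p) < n \<and> fst (pt \<pi> u p) \<noteq> u \<and> snd (pt \<pi> u p) < dg (fst (pt \<pi> u p))
     \<and> pt \<pi> (fst (pt \<pi> u p)) (snd (pt \<pi> u p)) = (u, p)"
proof (cases "u < m")
  case True
  then have p': "p < n - m" using p by (simp add: dg_def)
  have w: "m + p \<in> Y" using p' by (simp add: Y_iff)
  have q: "inv (\<pi> (m + p)) u < m + 2" using F_inv_lt[OF F w] True by simp
  have "\<pi> (m + p) (inv (\<pi> (m + p)) u) = u" using F_inv1[OF F w] .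
  then have "pt \<pi> (m + p) (inv (\<pi> (m + p)) u) = (u, p)"
    using pt_Y[OF w q] True by (simp add: nb_hub)
  then show ?thesis using pt_hub[OF True p'] True w q dg_Y[OF w] by (simp add: Y_iff)
next
  case False
  then have uY: "u \<in> Y" using u by (simp add: Y_iff)
  then have p': "p < m + 2" using p dg_Y by simp
  have c: "\<pi> u p < m + 2" using F_lt[OF F uY p'] .
  show ?thesis
  proof (cases "\<pi> u p < m")
    case True
    have e: "pt \<pi> u p = (\<pi> u p, u - m)" using pt_Y[OF uY p'] True by (simp add: nb_hub)
    have q: "u - m < n - m" using uY unfolding Y_iff by arith
    have "pt \<pi> (\<pi> u p) (u - m) = (u, p)"
      using pt_hub[OF True q] uY F_inv2[OF F uY] by (simp add: Y_iff)
    then show ?thesis using e True q dg_hub[OF True] False mn by simp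
  next
    case False2: False
    define w where "w = nb u (\<pi> u p)"
    have wY: "w \<in> Y" using nb_Y_iff[OF uY c] False2 by (simp add: w_def)
    have wsp: "w = sc u \<or> w = pr u" using False2 by (auto simp: w_def nb_def)
    have e: "pt \<pi> u p = (w, inv (\<pi> w) (slot w u))" using pt_Y[OF uY p'] wY by (simp add: w_def Y_iff)
    have sl: "slot w u < m + 2" using u slot_lt by simp
    have q: "inv (\<pi> w) (slot w u) < m + 2" using F_inv_lt[OF F wY sl] .
    have nbs: "nb w (slot w u) = u"
      using wsp nb_slot_sc[OF wY] nb_slot_pr[OF wY] pr_sc[OF uY] sc_pr[OF uY] by auto
    have su: "slot u w = \<pi> u p"
      using wsp False2 c sc_pr_ne[OF uY] sc_Y[OF uY] pr_Y[OF uY]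
      by (auto simp: slot_def w_def nb_def Y_iff split: if_splits)
    have "pt \<pi> w (inv (\<pi> w) (slot w u)) = (u, p)"
      using pt_Y[OF wY q] F_inv1[OF F wY] nbs uY su F_inv2[OF F uY] by (simp add: Y_iff)
    then show ?thesis using e wY q nb_ne[OF uY c] dg_Y[OF wY] by (simp add: Y_iff w_def)
  qed
qed

lemma pt_inj:
  assumes F: "\<pi> \<in> F" and u: "u < n"
  shows "inj_on (\<lambda>p. fst (pt \<pi> u p)) {..<dg u}"
proof (cases "u < m")
  case True
  then show ?thesis by (auto simp: inj_on_def pt_hub dg_hub)
next
  case False
  then have uY: "u \<in> Y" using u by (simp add: Y_iff)
  show ?thesis
  proof (rule inj_onI)
    fix p q assume p: "p \<in> {..<dg u}" and q: "q \<in> {..<dg u}" and e: "fst (pt \<pi> u p) = fst (pt \<pi> u q)"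
    have p': "p < m + 2" and q': "q < m + 2" using p q dg_Y[OF uY] by auto
    have "nb u (\<pi> u p) = nb u (\<pi> u q)" using e pt_Y[OF uY p'] pt_Y[OF uY q'] by simp
    then have "\<pi> u p = \<pi> u q" using nb_inj[OF uY] F_lt[OF F uY p'] F_lt[OF F uY q'] by (auto simp: inj_on_def)
    then show "p = q" using F_inv2[OF F uY] by metis
  qed
qed

lemma Gr_simps[simp]: "nv (Gr \<pi>) = n" "deg (Gr \<pi>) = dg" "port (Gr \<pi>) = pt \<pi>" by (simp_all add: Gr_def)

lemma adj_hubY: "u < m \<Longrightarrow> w \<in> Y \<Longrightarrow> (u, w) \<in> adj (Gr \<pi>)"
  unfolding adj_def Gr_def
  using mn by (auto simp: Y_iff dg_hub pt_hub intro!: exI[of _ "w - m"])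

lemma adj_Yc: assumes F: "\<pi> \<in> F" and u: "u \<in> Y" and c: "c < m + 2" shows "(u, nb u c) \<in> adj (Gr \<pi>)"
proof -
  have q: "inv (\<pi> u) c < m + 2" using F_inv_lt[OF F u c] .
  have "fst (pt \<pi> u (inv (\<pi> u) c)) = nb u c" using pt_Y[OF u q] F_inv1[OF F u] by simp
  then show ?thesis using q u unfolding adj_def Gr_def by (auto simp: dg_Y Y_iff)
qed

lemma adj_Yhub: "\<pi> \<in> F \<Longrightarrow> u \<in> Y \<Longrightarrow> h < m \<Longrightarrow> (u, h) \<in> adj (Gr \<pi>)"
  using adj_Yc[of \<pi> u h] by (simp add: nb_hub)
lemma adj_Ysc: "\<pi> \<in> F \<Longrightarrow> u \<in> Y \<Longrightarrow> (u, sc u) \<in> adj (Gr \<pi>)"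
  using adj_Yc[of \<pi> u m] by (simp add: nb_def)

lemma wf: "\<pi> \<in> F \<Longrightarrow> pg_wf (Gr \<pi>)"
proof -
  assume F: "\<pi> \<in> F"
  have mY: "m \<in> Y" using mn by (simp add: Y_iff)
  have to0: "(u, 0) \<in> (adj (Gr \<pi>))\<^sup>*" if "u < n" for u
  proof (cases "u < m")
    case True
    then have "(u, m) \<in> adj (Gr \<pi>)" using adj_hubY mY by simp
    moreover have "(m, 0) \<in> adj (Gr \<pi>)" using adj_Yhub[OF F mY] m3 by simp
    ultimately show ?thesis by (meson converse_rtrancl_into_rtrancl r_into_rtrancl)
  next
    case False
    then have "u \<in> Y" using that by (simp add: Y_iff)
    then show ?thesis using adj_Yhub[OF F] m3 by auto
  qed
  have from0: "(0, w) \<in> (adj (Gr \<pi>))\<^sup>*" if "w < n" for w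
  proof (cases "w < m")
    case True
    have "(0, m) \<in> adj (Gr \<pi>)" using adj_hubY mY m3 by simp
    moreover have "(m, w) \<in> adj (Gr \<pi>)" using adj_Yhub[OF F mY True] .
    ultimately show ?thesis by (meson converse_rtrancl_into_rtrancl r_into_rtrancl)
  next
    case False
    then have "w \<in> Y" using that by (simp add: Y_iff)
    then show ?thesis using adj_hubY m3 by auto
  qed
  have conn: "\<forall>u < n. \<forall>w < n. (u, w) \<in> (adj (Gr \<pi>))\<^sup>*" using to0 from0 by (meson rtrancl_trans)
  have g: "nv (Gr \<pi>) = n" "deg (Gr \<pi>) = dg" "port (Gr \<pi>) = pt \<pi>" by (simp_all add: Gr_def)
  show ?thesis
    unfolding pg_wf_def g
    using pt_valid[OF F] pt_inj[OF F] conn mn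
    by (auto simp: dg_def pt_out)
qed

definition hg :: "nat \<Rightarrow> nat" where
  "hg i = (if i < 2 * m then (if even i then i div 2 else m + i div 2) else i)"

lemma ham: "\<pi> \<in> F \<Longrightarrow> hamiltonian (Gr \<pi>)"
proof -
  assume F: "\<pi> \<in> F"
  define xs where "xs = map hg [0..<n]"
  have len: "length xs = n" by (simp add: xs_def)
  have inj: "inj_on hg {..<n}"
  proof (rule inj_onI)
    fix i j assume "i \<in> {..<n}" "j \<in> {..<n}" "hg i = hg j"
    then show "i = j" unfolding hg_def
      by (auto split: if_splits elim!: evenE oddE) 
  qed
  have dist: "distinct xs" unfolding xs_def using inj by (simp add: distinct_map atLeast0LessThan)
  have st: "set xs = {..<n}"
  proof
    show "set xs \<subseteq> {..<n}" using mn by (auto simp: xs_def hg_def)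
    show "{..<n} \<subseteq> set xs"
    proof
      fix x assume x: "x \<in> {..<n}"
      have "\<exists>i<n. hg i = x"
      proof (cases "x < m")
        case True then show ?thesis using mn by (intro exI[of _ "2 * x"]) (auto simp: hg_def)
      next
        case False
        show ?thesis
        proof (cases "x < 2 * m")
          case True then show ?thesis using mn False
            by (intro exI[of _ "2 * (x - m) + 1"]) (auto simp: hg_def)
        next
          case False then show ?thesis using x by (intro exI[of _ x]) (auto simp: hg_def)
        qed
      qed
      then show "x \<in> set xs" by (auto simp: xs_def)
    qed
  qed
  have edges: "(xs ! i, xs ! ((i + 1) mod length xs)) \<in> adj (Gr \<pi>)" if i: "i < length xs" for i
  proof -
    have i': "i < n" using i len by simp
    consider "i + 1 < 2 * m \<and> even i" | "i + 1 < 2 * m \<and> odd i" | "i + 1 = 2 * m"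
      | "2 * m \<le> i \<and> i + 1 < n" | "i + 1 = n" using i' by linarith
    then show ?thesis
    proof cases
      case 1
      then have "xs ! i = i div 2" "xs ! ((i + 1) mod length xs) = m + i div 2"
        using i' mn len by (auto simp: xs_def hg_def)
      moreover have "m + i div 2 \<in> Y" using 1 mn by (auto simp: Y_iff)
      ultimately show ?thesis using adj_hubY 1 by auto
    next
      case 2
      then have "xs ! i = m + i div 2" "xs ! ((i + 1) mod length xs) = (i + 1) div 2"
        using i' mn len by (auto simp: xs_def hg_def)
      moreover have "m + i div 2 \<in> Y" using 2 mn by (auto simp: Y_iff)
      moreover have "(i + 1) div 2 < m" using 2 by (auto elim!: oddE)
      ultimately show ?thesis using adj_Yhub[OF F] by metis
    next
      case 3
      have oi: "odd i" using 3 by presburger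
      then have "i div 2 = m - 1" using 3 by (auto elim!: oddE)
      then have "xs ! i = 2 * m - 1" "xs ! ((i + 1) mod length xs) = 2 * m"
        using i' mn len m3 3 oi by (auto simp: xs_def hg_def)
      moreover have "2 * m - 1 \<in> Y" "sc (2 * m - 1) = 2 * m" using mn m3 by (auto simp: Y_iff sc_def)
      ultimately show ?thesis using adj_Ysc[OF F] by metis
    next
      case 4
      then have "xs ! i = i" "xs ! ((i + 1) mod length xs) = i + 1"
        using i' mn len by (auto simp: xs_def hg_def)
      moreover have "i \<in> Y" "sc i = i + 1" using 4 mn by (auto simp: Y_iff sc_def)
      ultimately show ?thesis using adj_Ysc[OF F] by metis
    next
      case 5
      then have "xs ! i = n - 1" "xs ! ((i + 1) mod length xs) = 0"
        using i' mn len by (auto simp: xs_def hg_def)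
      moreover have "n - 1 \<in> Y" using mn by (auto simp: Y_iff)
      ultimately show ?thesis using adj_Yhub[OF F] m3 by fastforce
    qed
  qed
  show ?thesis unfolding hamiltonian_def
    using dist st len mn edges by (intro exI[of _ xs]) (auto simp: Gr_def)
qed

end



lemma least_first:
  assumes "i0 < length ps" "ps ! i0 = y" "y \<notin> set (take i0 ps)"
  shows "(LEAST i. ps ! i = y) = i0"
proof (rule Least_equality)
  show "ps ! i0 = y" by fact
  fix i assume "ps ! i = y"
  show "i0 \<le> i"
  proof (rule ccontr)
    assume "\<not> i0 \<le> i"
    then have "i < i0" by simp
    then have "ps ! i \<in> set (take i0 ps)" using assms(1) by (auto simp: in_set_conv_nth intro!: exI[of _ i])
    then show False using \<open>ps ! i = y\<close> assms(3) by simp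
  qed
qed

lemma least_in:
  assumes "y \<in> set ps"
  shows "(LEAST i. ps ! i = y) < length ps \<and> ps ! (LEAST i. ps ! i = y) = y
     \<and> y \<notin> set (take (LEAST i. ps ! i = y) ps)"
proof -
  obtain i where i: "i < length ps" "ps ! i = y" using assms by (auto simp: in_set_conv_nth)
  have e: "ps ! (LEAST i. ps ! i = y) = y" using LeastI[of "\<lambda>i. ps ! i = y"] i by blast
  have l: "(LEAST i. ps ! i = y) \<le> i" using Least_le[of "\<lambda>i. ps ! i = y"] i by blast
  have "y \<notin> set (take (LEAST i. ps ! i = y) ps)"
  proof
    assume "y \<in> set (take (LEAST i. ps ! i = y) ps)"
    then obtain j where "j < (LEAST i. ps ! i = y)" "ps ! j = y"
      by (auto simp: in_set_conv_nth)
    then show False using not_less_Least by blast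
  qed
  then show ?thesis using e l i by simp
qed

lemma card_new_steps:
  assumes "k < length ps"
  shows "card (set (take (Suc k) ps)) = Suc (card {i. i < k \<and> ps ! Suc i \<notin> set (take (Suc i) ps)})"
  using assms
proof (induction k)
  case 0 then show ?case by (cases ps) auto
next
  case (Suc k)
  have t: "take (Suc (Suc k)) ps = take (Suc k) ps @ [ps ! Suc k]" using Suc.prems by (simp add: take_Suc_conv_app_nth)
  have e: "{i. i < Suc k \<and> ps ! Suc i \<notin> set (take (Suc i) ps)} =
      {i. i < k \<and> ps ! Suc i \<notin> set (take (Suc i) ps)} \<union> (if ps ! Suc k \<notin> set (take (Suc k) ps) then {k} else {})"
    by (auto simp: less_Suc_eq)
  show ?case
  proof (cases "ps ! Suc k \<in> set (take (Suc k) ps)")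
    case True
    then show ?thesis using Suc t e by (simp add: insert_absorb)
  next
    case False
    then show ?thesis using Suc t e by simp
  qed
qed

context fam begin
definition SSx :: "nat \<Rightarrow> nat list \<Rightarrow> nat set" where
  "SSx t ps = {y \<in> Y. \<exists>i < t. ps ! i = y \<and> y \<notin> set (take i ps) \<and> ps ! Suc i \<in> Y \<and> ps ! Suc i \<notin> set (take (Suc i) ps)}"
definition IXx :: "nat list \<Rightarrow> nat \<Rightarrow> nat" where "IXx ps y = (LEAST i. ps ! i = y)"
definition PPx :: "nat list \<Rightarrow> hist \<Rightarrow> nat \<Rightarrow> nat" where "PPx ps h y = fst (h ! IXx ps y)"
definition AAx :: "nat list \<Rightarrow> hist \<Rightarrow> nat \<Rightarrow> nat" where "AAx ps h y = fst (snd (h ! (IXx ps y - 1)))"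
definition JJx :: "(nat \<Rightarrow> nat \<Rightarrow> nat) \<Rightarrow> nat list \<Rightarrow> hist \<Rightarrow> nat \<Rightarrow> nat set" where
  "JJx \<pi> ps h y = {c. c < m + 2 \<and> c \<noteq> AAx ps h y \<and> c \<noteq> PPx ps h y \<and> \<pi> y c < m}"
end

locale famrun = fam +
  fixes A :: alg and a :: "bool list" and t :: nat and ps :: "nat list" and h :: hist and \<pi>
  assumes F: "\<pi> \<in> F" and run: "isrun (Gr \<pi>) A a 0 t ps h" and allv: "set ps = {..<n}"
begin

lemma lens: "length ps = Suc t" "length h = t" "ps ! 0 = 0"
  using run by (auto simp: isrun_def)

lemma step: "j < t \<Longrightarrow> fst (h ! j) < dg (ps ! j) \<and> ps ! Suc j = fst (pt \<pi> (ps ! j) (fst (h ! j)))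
   \<and> snd (h ! j) = (snd (pt \<pi> (ps ! j) (fst (h ! j))), dg (ps ! Suc j))"
  using run by (auto simp: isrun_def)

lemma ps_lt: "i < Suc t \<Longrightarrow> ps ! i < n"
  using allv lens by (metis lessThan_iff nth_mem)

abbreviation "S \<equiv> SSx t ps"
abbreviation "IX \<equiv> IXx ps"
abbreviation "PP \<equiv> PPx ps h"
abbreviation "AA \<equiv> AAx ps h"
abbreviation "JJ \<equiv> JJx \<pi> ps h"
lemmas S_def = SSx_def[of t ps]
lemmas IX_def = IXx_def[of ps]
lemmas PP_def = PPx_def[of ps h]
lemmas AA_def = AAx_def[of ps h]
lemmas JJ_def = JJx_def[of \<pi> ps h]

lemma S_Y: "S \<subseteq> Y" by (auto simp: S_def)

lemma S_IX:
  assumes "y \<in> S"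
  shows "IX y < t \<and> ps ! IX y = y \<and> y \<notin> set (take (IX y) ps) \<and> ps ! Suc (IX y) \<in> Y
     \<and> ps ! Suc (IX y) \<notin> set (take (Suc (IX y)) ps) \<and> 0 < IX y"
proof -
  obtain i where i: "i < t" "ps ! i = y" "y \<notin> set (take i ps)" "ps ! Suc i \<in> Y" "ps ! Suc i \<notin> set (take (Suc i) ps)"
    using assms by (auto simp: S_def)
  have "IX y = i" unfolding IX_def using least_first[of i ps y] i lens by simp
  moreover have "0 < i" using i lens assms S_Y m3 by (cases i) (auto simp: Y_iff)
  ultimately show ?thesis using i by simp
qed

lemma arr_port:
  assumes u: "u < n" and p: "p < dg u" and y: "fst (pt \<pi> u p) = y" and yY: "y \<in> Y"
  shows "snd (pt \<pi> u p) = inv (\<pi> y) (slot y u) \<and> nb y (slot y u) = u"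
proof -
  have s: "snd (pt \<pi> u p) = inv (\<pi> y) (slot y u)"
  proof (cases "u < m")
    case True
    then show ?thesis using y pt_hub[OF True] p dg_hub[OF True] by (simp add: slot_def)
  next
    case False
    then have uY: "u \<in> Y" using u by (simp add: Y_iff)
    then show ?thesis using y yY pt_Y[OF uY] p dg_Y[OF uY] by (auto simp: Y_iff)
  qed
  have v: "pt \<pi> y (snd (pt \<pi> u p)) = (u, p)" using pt_valid[OF F u p] y by simp
  have q: "snd (pt \<pi> u p) < m + 2" using pt_valid[OF F u p] y dg_Y[OF yY] by simp
  have "fst (pt \<pi> y (snd (pt \<pi> u p))) = nb y (slot y u)"
    using pt_Y[OF yY q] s F_inv1[OF F yY] by simp
  then show ?thesis using v s by simp
qed

lemma S_facts:
  assumes yS: "y \<in> S"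
  shows "PP y < m + 2 \<and> m \<le> \<pi> y (PP y) \<and> \<pi> y (PP y) < m + 2 \<and> nb y (\<pi> y (PP y)) = ps ! Suc (IX y)
    \<and> AA y < m + 2 \<and> \<pi> y (AA y) = slot y (ps ! (IX y - 1)) \<and> PP y \<noteq> AA y"
proof -
  note ix = S_IX[OF yS]
  have yY: "y \<in> Y" using yS S_Y by auto
  define i where "i = IX y"
  have st: "fst (h ! i) < dg y \<and> ps ! Suc i = fst (pt \<pi> y (fst (h ! i)))" using step[of i] ix by (simp add: i_def)
  have pp: "PP y < m + 2" using st dg_Y[OF yY] by (simp add: PP_def i_def)
  have nbp: "nb y (\<pi> y (PP y)) = ps ! Suc i" using st pt_Y[OF yY pp] by (simp add: PP_def i_def)
  have c: "\<pi> y (PP y) < m + 2" using F_lt[OF F yY pp] .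
  have cm: "m \<le> \<pi> y (PP y)" using nb_Y_iff[OF yY c] nbp ix by (simp add: i_def)
  define u where "u = ps ! (i - 1)"
  have i1: "i - 1 < t" "Suc (i - 1) = i" using ix by (auto simp: i_def)
  have st2: "fst (h ! (i - 1)) < dg u \<and> y = fst (pt \<pi> u (fst (h ! (i - 1))))
      \<and> snd (h ! (i - 1)) = (snd (pt \<pi> u (fst (h ! (i - 1)))), dg y)"
    using step[of "i - 1"] i1 ix by (simp add: u_def i_def)
  have un: "u < n" using ps_lt i1 by (simp add: u_def)
  have fy: "fst (pt \<pi> u (fst (h ! (i - 1)))) = y" using st2 by simp
  have ap: "snd (pt \<pi> u (fst (h ! (i - 1)))) = inv (\<pi> y) (slot y u) \<and> nb y (slot y u) = u"
    using arr_port[OF un _ fy yY] st2 by blast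
  have aa: "AA y = inv (\<pi> y) (slot y u)" using st2 ap by (simp add: AA_def i_def)
  have aal: "AA y < m + 2" using aa F_inv_lt[OF F yY] slot_lt[OF un] by simp
  have pa: "\<pi> y (AA y) = slot y u" using aa F_inv1[OF F yY] by simp
  have "PP y \<noteq> AA y"
  proof
    assume "PP y = AA y"
    then have "ps ! Suc i = u" using nbp pa ap by simp
    moreover have "u \<in> set (take (Suc i) ps)" using i1 lens unfolding u_def
      by (auto simp: in_set_conv_nth intro!: exI[of _ "i - 1"])
    ultimately show False using ix by (simp add: i_def)
  qed
  then show ?thesis using pp cm c nbp aal pa by (simp add: i_def u_def)
qed

lemma JJ_card: assumes yS: "y \<in> S" shows "m - 2 \<le> card (JJ y)"
proof -
  have yY: "y \<in> Y" using yS S_Y by auto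
  define B where "B = {c. c < m + 2 \<and> \<pi> y c < m}"
  have "B = inv (\<pi> y) ` {..<m}"
  proof
    show "B \<subseteq> inv (\<pi> y) ` {..<m}"
    proof
      fix c assume "c \<in> B"
      then show "c \<in> inv (\<pi> y) ` {..<m}" using F_inv2[OF F yY, of c] by (auto simp: B_def intro!: image_eqI[of _ _ "\<pi> y c"])
    qed
    show "inv (\<pi> y) ` {..<m} \<subseteq> B" using F_inv_lt[OF F yY] F_inv1[OF F yY] by (auto simp: B_def)
  qed
  moreover have "inj (inv (\<pi> y))" using F_perm[OF F yY] by (meson permutes_inv permutes_inj)
  ultimately have cB: "card B = m" by (simp add: card_image inj_on_subset)
  have "JJ y = B - {AA y, PP y}" by (auto simp: JJ_def B_def)
  moreover have "card B - card {AA y, PP y} \<le> card (B - {AA y, PP y})" by (rule diff_card_le_card_Diff) simp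
  moreover have "card {AA y, PP y} \<le> 2" by (simp add: card_insert_le_m1)
  ultimately show ?thesis using cB by (metis diff_le_mono2 order_trans)
qed

lemma S_card: "2 * n - 2 * m - 2 - t \<le> card S"
proof -
  define W where "W = {i. i < t \<and> ps ! Suc i \<in> set (take (Suc i) ps)}"
  define N where "N = {i. i < t \<and> ps ! Suc i \<notin> set (take (Suc i) ps)}"
  define NH where "NH = {i. i < t \<and> ps ! Suc i < m \<and> ps ! Suc i \<notin> set (take (Suc i) ps)}"
  have cN: "card (set ps) = Suc (card N)" using card_new_steps[of t ps] lens by (simp add: N_def)
  then have cN': "card N = n - 1" using allv by simp
  have WN: "W \<union> N = {..<t}" "W \<inter> N = {}" by (auto simp: W_def N_def)
  have fW: "finite W" by (rule finite_subset[of _ "{..<t}"]) (auto simp: W_def)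
  have fN: "finite N" by (rule finite_subset[of _ "{..<t}"]) (auto simp: N_def)
  have fNH: "finite NH" by (rule finite_subset[of _ "{..<t}"]) (auto simp: NH_def)
  have WNt: "card W + card N = t" using card_Un_disjoint[OF fW fN WN(2)] WN(1) by simp
  then have cW: "card W = t + 1 - n" using cN' mn by simp
  have tn: "n \<le> t + 1" using WNt cN' mn by simp
  have cNH: "card NH \<le> m"
  proof -
    have "inj_on (\<lambda>i. ps ! Suc i) NH"
    proof (rule inj_onI)
      fix i j assume i: "i \<in> NH" and j: "j \<in> NH" and e: "ps ! Suc i = ps ! Suc j"
      show "i = j"
      proof (rule ccontr)
        assume "i \<noteq> j"
        then consider "i < j" | "j < i" by linarith
        then show False
        proof cases
          case 1
          then have "ps ! Suc i \<in> set (take (Suc j) ps)" using j lens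
            by (auto simp: NH_def in_set_conv_nth intro!: exI[of _ "Suc i"])
          then show False using e j by (simp add: NH_def)
        next
          case 2
          then have "ps ! Suc j \<in> set (take (Suc i) ps)" using i lens
            by (auto simp: NH_def in_set_conv_nth intro!: exI[of _ "Suc j"])
          then show False using e i by (simp add: NH_def)
        qed
      qed
    qed
    moreover have "(\<lambda>i. ps ! Suc i) ` NH \<subseteq> {..<m}" by (auto simp: NH_def)
    ultimately show ?thesis using card_inj_on_le[of _ NH "{..<m}"] by fastforce
  qed
  have IXinj: "inj_on IX (set ps)"
  proof (rule inj_onI)
    fix x y assume xy: "x \<in> set ps" "y \<in> set ps" "IX x = IX y"
    have "ps ! IX x = x" using least_in[OF xy(1)] unfolding IX_def by blast
    moreover have "ps ! IX y = y" using least_in[OF xy(2)] unfolding IX_def by blast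
    ultimately show "x = y" using xy(3) by metis
  qed
  define Z where "Z = {y \<in> Y. IX y = t}"
  have cZ: "card Z \<le> 1"
  proof -
    have "Z \<subseteq> {ps ! t}"
    proof
      fix y assume "y \<in> Z"
      then have "y \<in> set ps" "IX y = t" using allv by (auto simp: Z_def Y_iff)
      then show "y \<in> {ps ! t}" using least_in[of y ps] unfolding IX_def by auto
    qed
    then show ?thesis using card_mono[of "{ps ! t}" Z] by simp
  qed
  have sub: "IX ` ((Y - S) - Z) \<subseteq> W \<union> NH"
  proof
    fix x assume "x \<in> IX ` ((Y - S) - Z)"
    then obtain y where y: "y \<in> Y" "y \<notin> S" "y \<notin> Z" "x = IX y" by auto
    have yin: "y \<in> set ps" using y allv by (auto simp: Y_iff)
    have li: "IX y < Suc t" "ps ! IX y = y" "y \<notin> set (take (IX y) ps)"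
      using least_in[OF yin] lens unfolding IX_def by auto
    have xt: "x < t" using li y unfolding Z_def by auto
    have px: "ps ! x = y" "y \<notin> set (take x ps)" using li y by auto
    have "ps ! Suc x < n" using ps_lt xt by simp
    moreover have "ps ! x \<in> Y" using px y by simp
    moreover have "\<not> (ps ! Suc x \<in> Y \<and> ps ! Suc x \<notin> set (take (Suc x) ps))"
    proof -
      have nS: "\<forall>i<t. \<not> (ps ! i = y \<and> y \<notin> set (take i ps) \<and> ps ! Suc i \<in> Y \<and> ps ! Suc i \<notin> set (take (Suc i) ps))"
        using y(1,2) unfolding S_def by simp
      show ?thesis using nS[rule_format, OF xt] px by simp
    qed
    ultimately show "x \<in> W \<union> NH" using xt unfolding W_def NH_def Y_iff by auto
  qed
  have fY: "finite Y" by (simp add: Y_def)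
  have "card ((Y - S) - Z) \<le> card (W \<union> NH)"
  proof -
    have ss: "(Y - S) - Z \<subseteq> set ps" unfolding allv Y_def by auto
    have "inj_on IX ((Y - S) - Z)" using inj_on_subset[OF IXinj ss] .
    then have "card (IX ` ((Y - S) - Z)) = card ((Y - S) - Z)" by (rule card_image)
    moreover have "card (IX ` ((Y - S) - Z)) \<le> card (W \<union> NH)" using sub fW fNH by (intro card_mono) auto
    ultimately show ?thesis by simp
  qed
  moreover have "card (W \<union> NH) \<le> card W + card NH" by (rule card_Un_le)
  moreover have "card (Y - S) \<le> card ((Y - S) - Z) + card Z"
  proof -
    have "Y - S \<subseteq> ((Y - S) - Z) \<union> Z" by blast
    then have "card (Y - S) \<le> card (((Y - S) - Z) \<union> Z)" using fY by (intro card_mono) (auto simp: Z_def)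
    also have "\<dots> \<le> card ((Y - S) - Z) + card Z" by (rule card_Un_le)
    finally show ?thesis .
  qed
  moreover have "card (Y - S) = card Y - card S" using card_Diff_subset[OF finite_subset[OF S_Y fY] S_Y] .
  moreover have "card Y = n - m" by (simp add: Y_def)
  moreover have "card S \<le> card Y" using S_Y fY card_mono by blast
  ultimately have "card Y - card S \<le> t + 1 - n + m + 1" using cW cNH cZ by linarith
  then show ?thesis using \<open>card Y = n - m\<close> \<open>card S \<le> card Y\<close> mn tn by linarith
qed

end



context fam begin

lemma F_finite: "finite F"
proof -
  have "inj_on (\<lambda>\<pi>. restrict \<pi> Y) F"
  proof (rule inj_onI)
    fix \<pi>1 \<pi>2 assume a: "\<pi>1 \<in> F" "\<pi>2 \<in> F" "restrict \<pi>1 Y = restrict \<pi>2 Y"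
    show "\<pi>1 = \<pi>2"
    proof
      fix y show "\<pi>1 y = \<pi>2 y"
      proof (cases "y \<in> Y")
        case True then show ?thesis using a(3) by (metis restrict_apply')
      next
        case False then show ?thesis using a(1,2) by (simp add: F_def)
      qed
    qed
  qed
  moreover have "(\<lambda>\<pi>. restrict \<pi> Y) ` F \<subseteq> PiE Y (\<lambda>_. {p. p permutes {..<m+2}})"
    by (auto simp: F_def)
  moreover have "finite (PiE Y (\<lambda>_. {p. p permutes {..<m+2}}))"
    by (intro finite_PiE) (auto simp: Y_def finite_permutations)
  ultimately show ?thesis using inj_on_finite by blast
qed

lemma id_F: "(\<lambda>_. id) \<in> F" by (simp add: F_def permutes_id)

end

locale famA = fam +
  fixes A :: alg and a :: "bool list" and T :: nat
begin

definition Fast where "Fast = {\<pi> \<in> F. \<exists>t \<le> T. explores_in (Gr \<pi>) A a 0 t}"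
definition tt where "tt \<pi> = (SOME t. t \<le> T \<and> explores_in (Gr \<pi>) A a 0 t)"
definition PS where "PS \<pi> = fst (cfg (Gr \<pi>) A a 0 (tt \<pi>))"
definition HS where "HS \<pi> = snd (cfg (Gr \<pi>) A a 0 (tt \<pi>))"

lemma fast_run: assumes "\<pi> \<in> Fast" shows "famrun m n A a (tt \<pi>) (PS \<pi>) (HS \<pi>) \<pi> \<and> tt \<pi> \<le> T"
proof -
  have F: "\<pi> \<in> F" using assms by (simp add: Fast_def)
  have ex: "\<exists>t. t \<le> T \<and> explores_in (Gr \<pi>) A a 0 t" using assms by (auto simp: Fast_def)
  have tt: "tt \<pi> \<le> T \<and> explores_in (Gr \<pi>) A a 0 (tt \<pi>)" unfolding tt_def using someI_ex[OF ex] .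
  have r: "isrun (Gr \<pi>) A a 0 (tt \<pi>) (PS \<pi>) (HS \<pi>) \<and> set (PS \<pi>) = {..<n}"
    using explores_isrun[of "Gr \<pi>" A a 0 "tt \<pi>"] tt by (simp add: PS_def HS_def)
  show ?thesis using r tt F fam_axioms by (simp add: famrun_def famrun_axioms_def)
qed

abbreviation "SS \<pi> \<equiv> SSx (tt \<pi>) (PS \<pi>)"
abbreviation "PPs \<pi> \<equiv> PPx (PS \<pi>) (HS \<pi>)"
abbreviation "JJs \<pi> \<equiv> JJx \<pi> (PS \<pi>) (HS \<pi>)"

definition Dom where "Dom = Sigma Fast (\<lambda>\<pi>. PiE (SS \<pi>) (JJs \<pi>))"
definition sw where "sw \<pi> j = (\<lambda>y. if y \<in> SS \<pi> then \<pi> y \<circ> transpose (PPs \<pi> y) (j y) else \<pi> y)"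
definition bb where "bb \<pi> = (\<lambda>y. if y \<in> Y then y \<in> SS \<pi> \<and> \<pi> y (PPs \<pi> y) = m else undefined)"
definition Phi where "Phi = (\<lambda>(\<pi>, j). (sw \<pi> j, SS \<pi>, bb \<pi>))"

lemma Dom_facts:
  assumes "(\<pi>, j) \<in> Dom" and "y \<in> SS \<pi>"
  shows "j y < m + 2 \<and> j y \<noteq> AAx (PS \<pi>) (HS \<pi>) y \<and> j y \<noteq> PPs \<pi> y \<and> \<pi> y (j y) < m"
  using assms by (auto simp: Dom_def JJx_def PiE_def Pi_def)

lemma sw_F: assumes "(\<pi>, j) \<in> Dom" shows "sw \<pi> j \<in> F"
proof -
  have pF: "\<pi> \<in> Fast" using assms by (simp add: Dom_def)
  then interpret R: famrun m n A a "tt \<pi>" "PS \<pi>" "HS \<pi>" \<pi> using fast_run by blast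
  have F: "\<pi> \<in> F" by (rule R.F)
  show ?thesis unfolding F_def mem_Collect_eq
  proof (intro allI conjI impI)
    fix y assume y: "y \<in> Y"
    show "sw \<pi> j y permutes {..<m + 2}"
    proof (cases "y \<in> SS \<pi>")
      case True
      have "PPs \<pi> y < m + 2" using R.S_facts[OF True] by simp
      moreover have "j y < m + 2" using Dom_facts[OF assms True] by simp
      ultimately have "transpose (PPs \<pi> y) (j y) permutes {..<m+2}" by (intro permutes_swap_id) auto
      then show ?thesis using True F_perm[OF F y] by (simp add: sw_def permutes_compose)
    next
      case False then show ?thesis using F_perm[OF F y] by (simp add: sw_def)
    qed
  next
    fix y assume y: "y \<notin> Y"
    then have "y \<notin> SS \<pi>" using R.S_Y by auto
    then show "sw \<pi> j y = id" using F y by (simp add: sw_def F_def)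
  qed
qed

lemma Phi_into: "Phi ` Dom \<subseteq> F \<times> Pow Y \<times> PiE Y (\<lambda>_. UNIV)"
proof
  fix z assume "z \<in> Phi ` Dom"
  then obtain \<pi> j where d: "(\<pi>, j) \<in> Dom" and z: "z = Phi (\<pi>, j)" by auto
  have pF: "\<pi> \<in> Fast" using d by (simp add: Dom_def)
  then interpret R: famrun m n A a "tt \<pi>" "PS \<pi>" "HS \<pi>" \<pi> using fast_run by blast
  show "z \<in> F \<times> Pow Y \<times> PiE Y (\<lambda>_. UNIV)"
    using z sw_F[OF d] R.S_Y by (auto simp: Phi_def bb_def PiE_def extensional_def)
qed

lemma same_perm:
  assumes d1: "(\<pi>1, j1) \<in> Dom" and d2: "(\<pi>2, j2) \<in> Dom"
    and eq: "Phi (\<pi>1, j1) = Phi (\<pi>2, j2)"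
    and yS: "y \<in> SS \<pi>1"
    and i1: "i < tt \<pi>1" and i2: "i < tt \<pi>2"
    and pre: "take (Suc i) (PS \<pi>1) = take (Suc i) (PS \<pi>2)"
    and hf: "\<forall>i' \<le> i. fst (HS \<pi>1 ! i') = fst (HS \<pi>2 ! i')"
    and yin: "y \<in> set (take (Suc i) (PS \<pi>1))"
  shows "\<pi>1 y = \<pi>2 y \<and> j1 y = j2 y"
proof -
  have f1: "\<pi>1 \<in> Fast" using d1 by (simp add: Dom_def)
  have f2: "\<pi>2 \<in> Fast" using d2 by (simp add: Dom_def)
  interpret R1: famrun m n A a "tt \<pi>1" "PS \<pi>1" "HS \<pi>1" \<pi>1 using fast_run[OF f1] by blast
  interpret R2: famrun m n A a "tt \<pi>2" "PS \<pi>2" "HS \<pi>2" \<pi>2 using fast_run[OF f2] by blast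
  have swe: "sw \<pi>1 j1 = sw \<pi>2 j2" and Se: "SS \<pi>1 = SS \<pi>2" and be: "bb \<pi>1 = bb \<pi>2"
    using eq by (auto simp: Phi_def)
  have yS2: "y \<in> SS \<pi>2" using yS Se by simp
  have yY: "y \<in> Y" using yS R1.S_Y by auto
  define L where "L = take (Suc i) (PS \<pi>1)"
  note li = least_in[of y L, folded L_def]
  define k0 where "k0 = (LEAST k. L ! k = y)"
  have k0: "k0 < Suc i" "L ! k0 = y" "y \<notin> set (take k0 L)"
    using li yin R1.lens i1 by (auto simp: L_def k0_def)
  have tk1: "take k0 L = take k0 (PS \<pi>1)" using k0 by (simp add: L_def min_def)
  have tk2: "take k0 L = take k0 (PS \<pi>2)" using k0 pre by (simp add: L_def min_def)
  have n1: "PS \<pi>1 ! k0 = y" using k0 by (simp add: L_def)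
  have n2: "PS \<pi>2 ! k0 = y" using k0 pre by (metis L_def nth_take)
  have ix1: "IXx (PS \<pi>1) y = k0" unfolding IXx_def
    using least_first[of k0 "PS \<pi>1" y] n1 k0 tk1 R1.lens i1 by simp
  have ix2: "IXx (PS \<pi>2) y = k0" unfolding IXx_def
    using least_first[of k0 "PS \<pi>2" y] n2 k0 tk2 R2.lens i2 by simp
  have pe: "PPs \<pi>1 y = PPs \<pi>2 y" using ix1 ix2 hf k0 by (simp add: PPx_def)
  define p where "p = PPs \<pi>1 y"
  note sf1 = R1.S_facts[OF yS] and sf2 = R2.S_facts[OF yS2]
  have b: "(\<pi>1 y p = m) = (\<pi>2 y p = m)"
    using fun_cong[OF be, of y] yY yS yS2 pe by (simp add: bb_def p_def)
  have r: "m \<le> \<pi>1 y p" "\<pi>1 y p < m + 2" "m \<le> \<pi>2 y p" "\<pi>2 y p < m + 2"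
    using sf1 sf2 pe by (simp_all add: p_def)
  have pv: "\<pi>1 y p = \<pi>2 y p" using b r by (cases "\<pi>1 y p = m") auto
  have s1: "sw \<pi>1 j1 y = \<pi>1 y \<circ> transpose p (j1 y)" using yS by (simp add: sw_def p_def)
  have s2: "sw \<pi>2 j2 y = \<pi>2 y \<circ> transpose p (j2 y)" using yS2 pe by (simp add: sw_def p_def)
  have e1: "sw \<pi>1 j1 y (j1 y) = \<pi>1 y p" using s1 by simp
  have e2: "sw \<pi>1 j1 y (j2 y) = \<pi>2 y p" using s2 swe by simp
  have "inj (sw \<pi>1 j1 y)" using F_perm[OF sw_F[OF d1] yY] permutes_inj by blast
  then have je: "j1 y = j2 y" using e1 e2 pv by (metis injD)
  have "\<pi>1 y = \<pi>2 y"
  proof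
    fix x
    have "\<pi>1 y x = sw \<pi>1 j1 y (transpose p (j1 y) x)" using s1 by (simp add: transpose_involutory)
    also have "\<dots> = \<pi>2 y x" using s2 swe je by (simp add: transpose_involutory)
    finally show "\<pi>1 y x = \<pi>2 y x" .
  qed
  then show ?thesis using je by simp
qed

lemma new_arr:
  assumes d: "(\<pi>, j) \<in> Dom" and wS: "w \<in> SS \<pi>" and it: "i < tt \<pi>"
    and pw: "PS \<pi> ! Suc i = w" and nw: "w \<notin> set (take (Suc i) (PS \<pi>))"
  shows "inv (\<pi> w) (slot w (PS \<pi> ! i)) = inv (sw \<pi> j w) (slot w (PS \<pi> ! i))"
proof -
  have f: "\<pi> \<in> Fast" using d by (simp add: Dom_def)
  interpret R: famrun m n A a "tt \<pi>" "PS \<pi>" "HS \<pi>" \<pi> using fast_run[OF f] by blast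
  have wY: "w \<in> Y" using wS R.S_Y by auto
  have ix: "IXx (PS \<pi>) w = Suc i" unfolding IXx_def
    using least_first[of "Suc i" "PS \<pi>" w] pw nw R.lens it by simp
  define u where "u = PS \<pi> ! i"
  define p where "p = fst (HS \<pi> ! i)"
  note st = R.step[OF it, folded u_def p_def]
  have un: "u < n" using R.ps_lt it by (simp add: u_def)
  have fw: "fst (pt \<pi> u p) = w" using st pw by simp
  have ap: "snd (pt \<pi> u p) = inv (\<pi> w) (slot w u)" using R.arr_port[OF un _ fw wY] st by blast
  have aa: "AAx (PS \<pi>) (HS \<pi>) w = inv (\<pi> w) (slot w u)"
    using ix st ap by (simp add: AAx_def)
  define c where "c = AAx (PS \<pi>) (HS \<pi>) w"
  have pc: "\<pi> w c = slot w u" using aa F_inv1[OF R.F wY] by (simp add: c_def)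
  have c1: "c \<noteq> PPs \<pi> w" using R.S_facts[OF wS] by (simp add: c_def)
  have c2: "c \<noteq> j w" using Dom_facts[OF d wS] by (simp add: c_def)
  have "sw \<pi> j w c = slot w u" using wS c1 c2 pc by (simp add: sw_def)
  then have "inv (sw \<pi> j w) (slot w u) = c" using F_inv2[OF sw_F[OF d] wY, of c] by simp
  then show ?thesis using aa by (simp add: c_def u_def)
qed

lemma agree_port:
  assumes d1: "(\<pi>1, j1) \<in> Dom" and d2: "(\<pi>2, j2) \<in> Dom"
    and eq: "Phi (\<pi>1, j1) = Phi (\<pi>2, j2)"
    and i1: "i < tt \<pi>1" and i2: "i < tt \<pi>2"
    and pre: "take (Suc i) (PS \<pi>1) = take (Suc i) (PS \<pi>2)"
    and ph: "take i (HS \<pi>1) = take i (HS \<pi>2)"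
    and fe: "fst (HS \<pi>1 ! i) = fst (HS \<pi>2 ! i)"
  shows "pt \<pi>1 (PS \<pi>1 ! i) (fst (HS \<pi>1 ! i)) = pt \<pi>2 (PS \<pi>1 ! i) (fst (HS \<pi>1 ! i))"
proof -
  have f1: "\<pi>1 \<in> Fast" using d1 by (simp add: Dom_def)
  have f2: "\<pi>2 \<in> Fast" using d2 by (simp add: Dom_def)
  interpret R1: famrun m n A a "tt \<pi>1" "PS \<pi>1" "HS \<pi>1" \<pi>1 using fast_run[OF f1] by blast
  interpret R2: famrun m n A a "tt \<pi>2" "PS \<pi>2" "HS \<pi>2" \<pi>2 using fast_run[OF f2] by blast
  have swe: "sw \<pi>1 j1 = sw \<pi>2 j2" and Se: "SS \<pi>1 = SS \<pi>2"
    using eq by (auto simp: Phi_def)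
  have hf: "\<forall>i' \<le> i. fst (HS \<pi>1 ! i') = fst (HS \<pi>2 ! i')"
  proof (intro allI impI)
    fix i' assume "i' \<le> i"
    then consider "i' < i" | "i' = i" by linarith
    then show "fst (HS \<pi>1 ! i') = fst (HS \<pi>2 ! i')"
    proof cases
      case 1 then have "take i (HS \<pi>1) ! i' = take i (HS \<pi>2) ! i'" using ph by simp
      then show ?thesis using 1 by simp
    next
      case 2 then show ?thesis using fe by simp
    qed
  qed
  define u where "u = PS \<pi>1 ! i"
  define p where "p = fst (HS \<pi>1 ! i)"
  have u2: "PS \<pi>2 ! i = u"
  proof -
    have "take (Suc i) (PS \<pi>1) ! i = take (Suc i) (PS \<pi>2) ! i" using pre by simp
    then show ?thesis by (simp add: u_def)
  qed
  have p2: "fst (HS \<pi>2 ! i) = p" using fe by (simp add: p_def)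
  note st1 = R1.step[OF i1, folded u_def p_def]
  note st2 = R2.step[OF i2, unfolded u2 p2]
  have un: "u < n" using R1.ps_lt i1 by (simp add: u_def)
  have pd: "p < dg u" using st1 by simp
  have uin: "u \<in> set (take (Suc i) (PS \<pi>1))" using R1.lens i1
    by (auto simp: u_def in_set_conv_nth intro!: exI[of _ i])
  have same_node: "\<pi>1 v = \<pi>2 v" if "v \<in> set (take (Suc i) (PS \<pi>1))" for v
  proof (cases "v \<in> SS \<pi>1")
    case True
    then show ?thesis using same_perm[OF d1 d2 eq True i1 i2 pre hf that] by simp
  next
    case False
    then have "v \<notin> SS \<pi>2" using Se by simp
    then show ?thesis using fun_cong[OF swe, of v] False by (simp add: sw_def)
  qed
  have arr: "inv (\<pi>1 w) (slot w u) = inv (\<pi>2 w) (slot w u)"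
    if wY: "w \<in> Y" and w1: "fst (pt \<pi>1 u p) = w" and w2: "fst (pt \<pi>2 u p) = w" for w
  proof (cases "w \<in> SS \<pi>1")
    case False
    then have "w \<notin> SS \<pi>2" using Se by simp
    then have "\<pi>1 w = \<pi>2 w" using fun_cong[OF swe, of w] False by (simp add: sw_def)
    then show ?thesis by simp
  next
    case True
    show ?thesis
    proof (cases "w \<in> set (take (Suc i) (PS \<pi>1))")
      case True2: True
      then show ?thesis using same_node by simp
    next
      case False
      have pw1: "PS \<pi>1 ! Suc i = w" using st1 w1 by simp
      have pw2: "PS \<pi>2 ! Suc i = w" using st2 w2 by simp
      have nw2: "w \<notin> set (take (Suc i) (PS \<pi>2))" using False pre by simp
      have wS2: "w \<in> SS \<pi>2" using True Se by simp
      have "inv (\<pi>1 w) (slot w u) = inv (sw \<pi>1 j1 w) (slot w u)"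
        using new_arr[OF d1 True i1 pw1 False] by (simp add: u_def)
      moreover have "inv (\<pi>2 w) (slot w u) = inv (sw \<pi>2 j2 w) (slot w u)"
        using new_arr[OF d2 wS2 i2 pw2 nw2] u2 by simp
      ultimately show ?thesis using swe by simp
    qed
  qed
  show ?thesis
  proof (cases "u < m")
    case True
    have p': "p < n - m" using pd True by (simp add: dg_hub)
    have wY: "m + p \<in> Y" using p' by (simp add: Y_iff)
    have "inv (\<pi>1 (m + p)) (slot (m + p) u) = inv (\<pi>2 (m + p)) (slot (m + p) u)"
      using arr[OF wY] pt_hub[OF True p'] by simp
    then show ?thesis using pt_hub[OF True p'] True by (simp add: u_def p_def slot_def)
  next
    case False
    then have uY: "u \<in> Y" using un by (simp add: Y_iff)
    have p': "p < m + 2" using pd dg_Y[OF uY] by simp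
    have pe: "\<pi>1 u = \<pi>2 u" using same_node[OF uin] .
    define w where "w = nb u (\<pi>1 u p)"
    have e1: "pt \<pi>1 u p = (w, if w < m then u - m else inv (\<pi>1 w) (slot w u))"
      using pt_Y[OF uY p'] by (simp add: w_def)
    have e2: "pt \<pi>2 u p = (w, if w < m then u - m else inv (\<pi>2 w) (slot w u))"
      using pt_Y[OF uY p'] pe by (simp add: w_def)
    show ?thesis
    proof (cases "w < m")
      case True then show ?thesis using e1 e2 by (simp add: u_def p_def)
    next
      case False
      have wY: "w \<in> Y" using False nb_lt[OF uY F_lt[OF R1.F uY p']] by (simp add: Y_iff w_def)
      have "inv (\<pi>1 w) (slot w u) = inv (\<pi>2 w) (slot w u)" using arr[OF wY] e1 e2 by simp
      then show ?thesis using e1 e2 by (simp add: u_def p_def)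
    qed
  qed
qed

lemma Phi_inj: "inj_on Phi Dom"
proof (rule inj_onI)
  fix x1 x2 assume x1: "x1 \<in> Dom" and x2: "x2 \<in> Dom" and eq: "Phi x1 = Phi x2"
  obtain \<pi>1 j1 where xx1: "x1 = (\<pi>1, j1)" by (cases x1)
  obtain \<pi>2 j2 where xx2: "x2 = (\<pi>2, j2)" by (cases x2)
  have d1: "(\<pi>1, j1) \<in> Dom" and d2: "(\<pi>2, j2) \<in> Dom" and eq': "Phi (\<pi>1, j1) = Phi (\<pi>2, j2)"
    using x1 x2 eq xx1 xx2 by auto
  have f1: "\<pi>1 \<in> Fast" using d1 by (simp add: Dom_def)
  have f2: "\<pi>2 \<in> Fast" using d2 by (simp add: Dom_def)
  interpret R1: famrun m n A a "tt \<pi>1" "PS \<pi>1" "HS \<pi>1" \<pi>1 using fast_run[OF f1] by blast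
  interpret R2: famrun m n A a "tt \<pi>2" "PS \<pi>2" "HS \<pi>2" \<pi>2 using fast_run[OF f2] by blast
  have swe: "sw \<pi>1 j1 = sw \<pi>2 j2" and Se: "SS \<pi>1 = SS \<pi>2"
    using eq' by (auto simp: Phi_def)
  have det: "tt \<pi>1 = tt \<pi>2 \<and> PS \<pi>1 = PS \<pi>2 \<and> HS \<pi>1 = HS \<pi>2"
  proof (rule isrun_det[OF R1.run R2.run])
    show "deg (Gr \<pi>1) = deg (Gr \<pi>2)" by simp
  next
    fix j assume "j < tt \<pi>1" "j < tt \<pi>2" "take (Suc j) (PS \<pi>1) = take (Suc j) (PS \<pi>2)"
      "take j (HS \<pi>1) = take j (HS \<pi>2)" "fst (HS \<pi>1 ! j) = fst (HS \<pi>2 ! j)"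
    then show "port (Gr \<pi>1) (PS \<pi>1 ! j) (fst (HS \<pi>1 ! j)) = port (Gr \<pi>2) (PS \<pi>1 ! j) (fst (HS \<pi>1 ! j))"
      using agree_port[OF d1 d2 eq'] by simp
  qed
  have both: "\<pi>1 y = \<pi>2 y \<and> j1 y = j2 y" if yS: "y \<in> SS \<pi>1" for y
  proof -
    define i where "i = IXx (PS \<pi>1) y"
    have ix: "i < tt \<pi>1" "PS \<pi>1 ! i = y" using R1.S_IX[OF yS] by (simp_all add: i_def)
    have yin: "y \<in> set (take (Suc i) (PS \<pi>1))" using ix R1.lens
      by (auto simp: in_set_conv_nth intro!: exI[of _ i])
    show ?thesis using same_perm[OF d1 d2 eq' yS ix(1)] ix det yin by simp
  qed
  have pe: "\<pi>1 = \<pi>2"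
  proof
    fix y show "\<pi>1 y = \<pi>2 y"
    proof (cases "y \<in> SS \<pi>1")
      case True then show ?thesis using both by simp
    next
      case False
      then have "y \<notin> SS \<pi>2" using Se by simp
      then show ?thesis using fun_cong[OF swe, of y] False by (simp add: sw_def)
    qed
  qed
  have je: "j1 = j2"
  proof
    fix y show "j1 y = j2 y"
    proof (cases "y \<in> SS \<pi>1")
      case True then show ?thesis using both by simp
    next
      case False
      then have "y \<notin> SS \<pi>2" using Se by simp
      then show ?thesis using d1 d2 False by (auto simp: Dom_def PiE_def extensional_def)
    qed
  qed
  show "x1 = x2" using pe je xx1 xx2 by simp
qed

lemma card_bound:
  assumes m3': "3 \<le> m"
  shows "card Fast * (m - 2) ^ (2 * n - 2 * m - 2 - T) \<le> card F * 2 ^ (n - m) * 2 ^ (n - m)"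
proof -
  have fF: "finite Fast" using F_finite by (rule finite_subset[rotated]) (auto simp: Fast_def)
  have fY: "finite Y" by (simp add: Y_def)
  have fin_S: "finite (SS \<pi>)" for \<pi>
    by (rule finite_subset[of _ Y]) (auto simp: SSx_def Y_def)
  have fin_J: "finite (PiE (SS \<pi>) (JJs \<pi>))" for \<pi>
    by (rule finite_PiE) (auto simp: JJx_def fin_S)
  have cD: "card Dom = (\<Sum>\<pi>\<in>Fast. card (PiE (SS \<pi>) (JJs \<pi>)))"
    unfolding Dom_def using fF fin_J by (simp add: card_SigmaI)
  have lb: "(m - 2) ^ (2 * n - 2 * m - 2 - T) \<le> card (PiE (SS \<pi>) (JJs \<pi>))" if pf: "\<pi> \<in> Fast" for \<pi>
  proof -
    interpret R: famrun m n A a "tt \<pi>" "PS \<pi>" "HS \<pi>" \<pi> using fast_run[OF pf] by blast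
    have tT: "tt \<pi> \<le> T" using fast_run[OF pf] by simp
    have fS: "finite (SS \<pi>)" using finite_subset[OF R.S_Y fY] .
    have "card (PiE (SS \<pi>) (JJs \<pi>)) = (\<Prod>y\<in>SS \<pi>. card (JJs \<pi> y))" using card_PiE[OF fS] .
    also have "\<dots> \<ge> (\<Prod>y\<in>SS \<pi>. (m - 2))" using R.JJ_card by (intro prod_mono) auto
    finally have "(m - 2) ^ card (SS \<pi>) \<le> card (PiE (SS \<pi>) (JJs \<pi>))" by simp
    moreover have "(m - 2) ^ (2 * n - 2 * m - 2 - T) \<le> (m - 2) ^ card (SS \<pi>)"
      using R.S_card tT m3' by (intro power_increasing) auto
    ultimately show ?thesis by linarith
  qed
  have "card Fast * (m - 2) ^ (2 * n - 2 * m - 2 - T) = (\<Sum>\<pi>\<in>Fast. (m - 2) ^ (2 * n - 2 * m - 2 - T))" by simp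
  also have "\<dots> \<le> card Dom" unfolding cD using lb by (intro sum_mono) auto
  also have "\<dots> = card (Phi ` Dom)" using card_image[OF Phi_inj] by simp
  also have "\<dots> \<le> card (F \<times> Pow Y \<times> PiE Y (\<lambda>_. UNIV :: bool set))"
  proof (rule card_mono[OF _ Phi_into])
    have "finite (PiE Y (\<lambda>_. UNIV :: bool set))" using fY by (intro finite_PiE) auto
    then show "finite (F \<times> Pow Y \<times> PiE Y (\<lambda>_. UNIV :: bool set))" using F_finite fY by simp
  qed
  also have "\<dots> = card F * 2 ^ (n - m) * 2 ^ (n - m)"
    using fY by (simp add: card_cartesian_product card_Pow card_PiE Y_def)
  finally show ?thesis .
qed

end

context fam begin

lemma per_n:
  fixes A :: alg and f :: "pgraph \<Rightarrow> nat \<Rightarrow> bool list" and T Mx :: nat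
  assumes all: "\<forall>\<pi>\<in>F. \<exists>t \<le> T. explores_in (Gr \<pi>) A (f (Gr \<pi>) 0) 0 t"
    and len: "\<forall>\<pi>\<in>F. length (f (Gr \<pi>) 0) \<le> Mx"
  shows "(m - 2) ^ (2 * n - 2 * m - 2 - T) \<le> 2 ^ (Mx + 1) * 4 ^ (n - m)"
proof -
  define K where "K = (m - 2) ^ (2 * n - 2 * m - 2 - T)"
  define Adv where "Adv = {xs :: bool list. set xs \<subseteq> UNIV \<and> length xs \<le> Mx}"
  have cA: "card Adv = (\<Sum>i\<le>Mx. 2 ^ i)" unfolding Adv_def using card_lists_length_le[of "UNIV :: bool set" Mx] by simp
  have geo: "(\<Sum>i\<le>k. (2::nat) ^ i) < 2 ^ (k + 1)" for k by (induction k) auto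
  have cA': "card Adv \<le> 2 ^ (Mx + 1)" using cA geo[of Mx] by simp
  have fA: "finite Adv" unfolding Adv_def using finite_lists_length_le[of "UNIV :: bool set" Mx] by simp
  let ?Fa = "\<lambda>a. famA.Fast m n A a T"
  have cb: "card (?Fa a) * K \<le> card F * 2 ^ (n - m) * 2 ^ (n - m)" for a
    using famA.card_bound[of m n A a T] fam_axioms m3 by (simp add: famA_def K_def)
  have sub: "F \<subseteq> (\<Union>a\<in>Adv. ?Fa a)"
  proof
    fix \<pi> assume p: "\<pi> \<in> F"
    have "f (Gr \<pi>) 0 \<in> Adv" using len p by (simp add: Adv_def)
    moreover have "\<pi> \<in> ?Fa (f (Gr \<pi>) 0)" using all p fam_axioms by (simp add: famA.Fast_def famA_def)
    ultimately show "\<pi> \<in> (\<Union>a\<in>Adv. ?Fa a)" by blast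
  qed
  have "card F \<le> card (\<Union>a\<in>Adv. ?Fa a)"
  proof (rule card_mono[OF _ sub])
    have "?Fa a \<subseteq> F" for a using fam_axioms by (auto simp: famA.Fast_def famA_def)
    then show "finite (\<Union>a\<in>Adv. ?Fa a)" using F_finite fA by (meson UN_least finite_subset)
  qed
  also have "\<dots> \<le> (\<Sum>a\<in>Adv. card (?Fa a))" by (rule card_UN_le[OF fA])
  finally have c1: "card F * K \<le> (\<Sum>a\<in>Adv. card (?Fa a)) * K" by simp
  also have "\<dots> = (\<Sum>a\<in>Adv. card (?Fa a) * K)" by (simp add: sum_distrib_right)
  also have "\<dots> \<le> (\<Sum>a\<in>Adv. card F * 2 ^ (n - m) * 2 ^ (n - m))" using cb by (intro sum_mono) auto
  also have "\<dots> = card F * (card Adv * 4 ^ (n - m))"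
    by (simp add: power_mult_distrib[symmetric] mult_ac)
  finally have "card F * K \<le> card F * (card Adv * 4 ^ (n - m))" .
  moreover have "0 < card F" using F_finite id_F card_gt_0_iff by blast
  ultimately have "K \<le> card Adv * 4 ^ (n - m)" by simp
  also have "\<dots> \<le> 2 ^ (Mx + 1) * 4 ^ (n - m)" using cA' by simp
  finally show ?thesis by (simp add: K_def)
qed

end

lemma wf_finite: "finite {G :: pgraph. pg_wf G \<and> nv G = n}"
proof -
  define Dm where "Dm = PiE {..<n} (\<lambda>_. {..n})"
  define Pm where "Pm = PiE {..<n} (\<lambda>_. PiE {..<n} (\<lambda>_. {..<n} \<times> {..n}))"
  define \<phi> :: "pgraph \<Rightarrow> (nat \<Rightarrow> nat) \<times> (nat \<Rightarrow> nat \<Rightarrow> nat \<times> nat)" where "\<phi> = (\<lambda>G. (restrict (deg G) {..<n}, restrict (\<lambda>u. restrict (port G u) {..<n}) {..<n}))"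
  have dle: "deg G u \<le> n" if w: "pg_wf G" "nv G = n" for G u
  proof (cases "u < n")
    case True
    have "inj_on (\<lambda>p. fst (port G u p)) {..<deg G u}" using w True by (simp add: pg_wf_def)
    moreover have "(\<lambda>p. fst (port G u p)) ` {..<deg G u} \<subseteq> {..<n}" using w True by (auto simp: pg_wf_def)
    ultimately have "card {..<deg G u} \<le> card {..<n}" by (intro card_inj_on_le) auto
    then show ?thesis by simp
  next
    case False then show ?thesis using w by (simp add: pg_wf_def)
  qed
  have pin: "port G u p \<in> {..<n} \<times> {..n}" if w: "pg_wf G" "nv G = n" for G u p
  proof (cases "u < n \<and> p < deg G u")
    case True
    then have "fst (port G u p) < n" "snd (port G u p) < deg G (fst (port G u p))" using w by (auto simp: pg_wf_def)
    moreover have "deg G (fst (port G u p)) \<le> n" using dle w by blast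
    ultimately show ?thesis by (simp add: mem_Times_iff)
  next
    case False
    then have "port G u p = (0, 0)" using w by (simp add: pg_wf_def)
    then show ?thesis using w by (simp add: pg_wf_def)
  qed
  have inj: "inj_on \<phi> {G. pg_wf G \<and> nv G = n}"
  proof (rule inj_onI)
    fix G1 G2 assume g1: "G1 \<in> {G. pg_wf G \<and> nv G = n}" and g2: "G2 \<in> {G. pg_wf G \<and> nv G = n}" and e: "\<phi> G1 = \<phi> G2"
    have w1: "pg_wf G1" "nv G1 = n" and w2: "pg_wf G2" "nv G2 = n" using g1 g2 by auto
    have de: "deg G1 = deg G2"
    proof
      fix u show "deg G1 u = deg G2 u"
      proof (cases "u < n")
        case True then show ?thesis using e by (metis \<phi>_def fst_conv lessThan_iff restrict_apply')
      next
        case False then show ?thesis using w1 w2 by (simp add: pg_wf_def)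
      qed
    qed
    have pe: "port G1 = port G2"
    proof (intro ext)
      fix u p show "port G1 u p = port G2 u p"
      proof (cases "u < n \<and> p < n")
        case True
        then have "restrict (\<lambda>u. restrict (port G1 u) {..<n}) {..<n} u p = restrict (\<lambda>u. restrict (port G2 u) {..<n}) {..<n} u p"
          using e by (simp add: \<phi>_def)
        then show ?thesis using True by simp
      next
        case False
        then have "\<not> (u < n \<and> p < deg G1 u)" "\<not> (u < n \<and> p < deg G2 u)" using dle[OF w1] dle[OF w2] by (auto simp: not_less intro: le_trans)
        then show ?thesis using w1 w2 by (simp add: pg_wf_def)
      qed
    qed
    show "G1 = G2" using w1 w2 de pe by (intro pgraph.equality) auto
  qed
  moreover have "\<phi> ` {G. pg_wf G \<and> nv G = n} \<subseteq> Dm \<times> Pm"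
  proof
    fix z assume "z \<in> \<phi> ` {G. pg_wf G \<and> nv G = n}"
    then obtain G where G: "pg_wf G" "nv G = n" "z = \<phi> G" by auto
    have "restrict (deg G) {..<n} \<in> Dm" unfolding Dm_def restrict_PiE_iff using dle[OF G(1,2)] by simp
    moreover have "restrict (\<lambda>u. restrict (port G u) {..<n}) {..<n} \<in> Pm"
      unfolding Pm_def restrict_PiE_iff using pin[OF G(1,2)] by simp
    ultimately show "z \<in> Dm \<times> Pm" using G(3) by (simp add: \<phi>_def)
  qed
  moreover have "finite (Dm \<times> Pm)" by (auto simp: Dm_def Pm_def intro!: finite_PiE)
  ultimately show ?thesis using inj_on_finite by blast
qed




lemma E4: "eventually (\<lambda>n::nat. (7*real n/8 - 2*sqrt (real n) - 2) * log 2 (sqrt (real n) - 3) > real n * log 2 (real n)/8 + 2*real n + 1) at_top"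
  by real_asymp
lemma E5a: "eventually (\<lambda>n::nat. 4 \<le> sqrt (real n)) at_top"
  by real_asymp
lemma E5b: "eventually (\<lambda>n::nat. 2 * sqrt (real n) + 3 \<le> real n) at_top"
  by real_asymp

lemma E2: assumes "\<epsilon> < 1" shows "eventually (\<lambda>n::nat. real n powr \<epsilon> \<le> real n / 8) at_top"
proof -
  have "((\<lambda>x::real. x powr (\<epsilon> - 1)) \<longlongrightarrow> 0) at_top" using assms by (intro tendsto_neg_powr filterlim_ident) auto
  then have "((\<lambda>n::nat. real n powr (\<epsilon> - 1)) \<longlongrightarrow> 0) at_top"
    using filterlim_compose filterlim_real_sequentially by blast
  then have "eventually (\<lambda>n::nat. real n powr (\<epsilon> - 1) < 1/8) at_top"
    by (rule order_tendstoD) simp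
  moreover have "eventually (\<lambda>n::nat. 0 < n) at_top" by (simp add: eventually_gt_at_top)
  ultimately show ?thesis
  proof eventually_elim
    case (elim n)
    have "real n powr \<epsilon> = real n powr (\<epsilon> - 1) * real n" using elim(2)
      by (simp add: powr_diff)
    also have "\<dots> \<le> 1/8 * real n" using elim by (intro mult_right_mono) auto
    finally show ?case by simp
  qed
qed

theorem mainTheorem13:
  fixes \<epsilon> :: real
    and f :: "pgraph \<Rightarrow> nat \<Rightarrow> bool list"
    and A :: alg
  assumes "\<epsilon> < 1"
    and "(\<lambda>n. real (Max {length (f G v) | G v. pg_wf G \<and> nv G = n \<and> v < n}))
           \<in> o(\<lambda>n. real n * log 2 (real n))"
  shows "\<forall>N. \<exists>n \<ge> N. \<exists>G v. pg_wf G \<and> nv G = n \<and> hamiltonian G \<and> v < n \<and>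
           \<not> (\<exists>t. real t < real n + real n powr \<epsilon> \<and> explores_in G A (f G v) v t)"
proof (rule ccontr)
  assume "\<not> ?thesis"
  then obtain N where HN: "\<And>n G v. n \<ge> N \<Longrightarrow> pg_wf G \<Longrightarrow> nv G = n \<Longrightarrow> hamiltonian G \<Longrightarrow> v < n \<Longrightarrow>
      \<exists>t. real t < real n + real n powr \<epsilon> \<and> explores_in G A (f G v) v t" by blast
  define MS where "MS n = {length (f G v) | G v. pg_wf G \<and> nv G = n \<and> v < n}" for n
  have E1: "eventually (\<lambda>n. norm (real (Max (MS n))) \<le> 1/8 * norm (real n * log 2 (real n))) at_top"
    using landau_o.smallD[OF assms(2), of "1/8"] by (simp add: MS_def)
  define P where "P n \<longleftrightarrow> n \<ge> N \<and> norm (real (Max (MS n))) \<le> 1/8 * norm (real n * log 2 (real n))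
      \<and> real n powr \<epsilon> \<le> real n / 8
      \<and> (7*real n/8 - 2*sqrt (real n) - 2) * log 2 (sqrt (real n) - 3) > real n * log 2 (real n)/8 + 2*real n + 1
      \<and> 4 \<le> sqrt (real n) \<and> 2 * sqrt (real n) + 3 \<le> real n \<and> 1 \<le> n" for n
  have ev: "eventually P at_top"
    using E1 E2[OF assms(1)] E4 E5a E5b eventually_ge_at_top[of N] eventually_ge_at_top[of 1]
    unfolding P_def by eventually_elim blast
  then obtain N0 where N0: "\<forall>k\<ge>N0. P k" unfolding eventually_at_top_linorder by blast
  obtain n where "P n" using N0 by blast
  then have n: "n \<ge> N" "norm (real (Max (MS n))) \<le> 1/8 * norm (real n * log 2 (real n))"
    "real n powr \<epsilon> \<le> real n / 8"
    "(7*real n/8 - 2*sqrt (real n) - 2) * log 2 (sqrt (real n) - 3) > real n * log 2 (real n)/8 + 2*real n + 1"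
    "4 \<le> sqrt (real n)" "2 * sqrt (real n) + 3 \<le> real n" "1 \<le> n"
    unfolding P_def by blast+
  define m where "m = nat \<lfloor>sqrt (real n)\<rfloor>"
  have ms: "real m \<le> sqrt (real n)" "sqrt (real n) - 1 \<le> real m"
    using n(5) by (auto simp: m_def of_nat_nat floor_le_iff)
  have m3: "3 \<le> m" using ms n(5) by linarith
  have mn: "2 * m + 3 \<le> n" using ms n(6) by linarith
  interpret fam m n using m3 mn by unfold_locales
  define T where "T = nat \<lfloor>real n + real n powr \<epsilon>\<rfloor>"
  define Mx where "Mx = Max (MS n)"
  have finMS: "finite (MS n)"
  proof -
    have "MS n \<subseteq> (\<lambda>(G, v). length (f G v)) ` ({G. pg_wf G \<and> nv G = n} \<times> {..<n})"
      by (auto simp: MS_def)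
    then show ?thesis using wf_finite[of n] finite_subset by blast
  qed
  have all: "\<forall>\<pi>\<in>F. \<exists>t \<le> T. explores_in (Gr \<pi>) A (f (Gr \<pi>) 0) 0 t"
  proof
    fix \<pi> assume p: "\<pi> \<in> F"
    obtain t where t: "real t < real n + real n powr \<epsilon>" "explores_in (Gr \<pi>) A (f (Gr \<pi>) 0) 0 t"
      using HN[OF n(1) wf[OF p] _ ham[OF p]] n(7) by auto
    have "of_int (int t) \<le> real n + real n powr \<epsilon>" using t(1) by simp
    then have "int t \<le> \<lfloor>real n + real n powr \<epsilon>\<rfloor>" by (simp only: le_floor_iff)
    then have "t \<le> T" unfolding T_def by linarith
    then show "\<exists>t \<le> T. explores_in (Gr \<pi>) A (f (Gr \<pi>) 0) 0 t" using t(2) by blast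
  qed
  have len: "\<forall>\<pi>\<in>F. length (f (Gr \<pi>) 0) \<le> Mx"
  proof
    fix \<pi> assume p: "\<pi> \<in> F"
    have "length (f (Gr \<pi>) 0) \<in> MS n" using wf[OF p] n(7) unfolding MS_def by force
    then show "length (f (Gr \<pi>) 0) \<le> Mx" unfolding Mx_def using finMS by simp
  qed
  define s0 where "s0 = 2 * n - 2 * m - 2 - T"
  have key: "(m - 2) ^ s0 \<le> 2 ^ (Mx + 1) * 4 ^ (n - m)" using per_n[of T A f Mx, OF all len] by (simp add: s0_def)
  have Tle: "real T \<le> real n + real n powr \<epsilon>"
    unfolding T_def using of_nat_floor[of "real n + real n powr \<epsilon>"] by auto
  have s0r: "real s0 \<ge> 7*real n/8 - 2*sqrt (real n) - 2"
  proof -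
    have "real s0 \<ge> 2 * real n - 2 * real m - 2 - real T" unfolding s0_def by linarith
    then show ?thesis using Tle n(3) ms by linarith
  qed
  have m2: "real (m - 2) \<ge> sqrt (real n) - 3" using ms m3 by linarith
  have l0: "0 \<le> log 2 (sqrt (real n) - 3)" using n(5) by simp
  have lm: "log 2 (sqrt (real n) - 3) \<le> log 2 (real (m - 2))" using m2 n(5) by simp
  have "(7*real n/8 - 2*sqrt (real n) - 2) * log 2 (sqrt (real n) - 3) \<le> real s0 * log 2 (real (m - 2))"
    using s0r lm l0 by (intro mult_mono) auto
  also have "\<dots> = log 2 (real ((m - 2) ^ s0))" using m3 by (simp add: log_nat_power)
  also have "\<dots> \<le> log 2 (real (2 ^ (Mx + 1) * 4 ^ (n - m)))"
  proof (rule log_mono)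
    show "real ((m - 2) ^ s0) \<le> real (2 ^ (Mx + 1) * 4 ^ (n - m))" using key by (simp only: of_nat_le_iff)
    show "0 < real ((m - 2) ^ s0)" using m3 by simp
  qed simp
  also have "\<dots> = real (Mx + 1) + 2 * real (n - m)"
  proof -
    have l4: "log 2 (4::real) = 2"
    proof -
      have "log 2 ((2::real) ^ 2) = real 2 * log 2 2" by (rule log_nat_power) simp
      then show ?thesis by simp
    qed
    show ?thesis by (simp add: log_mult log_nat_power l4)
  qed
  also have "\<dots> \<le> real Mx + 1 + 2 * real n" by simp
  finally have c: "(7*real n/8 - 2*sqrt (real n) - 2) * log 2 (sqrt (real n) - 3) \<le> real Mx + 1 + 2 * real n" .
  have "real Mx \<le> real n * log 2 (real n) / 8"
  proof -
    have "0 \<le> real n * log 2 (real n)" using n(7) by simp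
    then show ?thesis using n(2) by (simp add: Mx_def)
  qed
  then show False using c n(4) by linarith
qed


end
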